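(* Let $\mathcal{A}$ be a separating union-closed family with base set $[n]$, height $h$, and $h=|\mathcal{B}(\mathcal{A})|=4$. Then \[\mathrm{Avg}(\mathcal{A}) = \frac{\sum_{A\in\mathcal{A}}|A|}{|\mathcal{A}|} > \Big\lfloor \frac{n}{2} \Big\rfloor - 1.\]
   Context: A family of sets $\mathcal{A}$ is union-closed if it is a finite family of distinct finite sets with at least one nonempty member set, and $X,Y\in\mathcal{A}$ implies $X\cup Y\in\mathcal{A}$ (the empty set may be a member). For a family $\mathcal{F}$, $b(\mathcal{F})=\bigcup_{F\in\mathcal{F}}F$; the base set $b(\mathcal{A})$ is denoted $[n]=\{1,\dots,n\}$. $\mathcal{A}$ is separating if for any two distinct $x,y\in[n]$ there is $A\in\mathcal{A}$ containing exactly one of $x,y$. A chain in $\mathcal{A}$ is a subfamily any two distinct members of which are comparable under proper inclusion; the height $h$ of $\mathcal{A}$ is the maximum size of a chain in $\mathcal{A}$. For real $x\ge 0$, $\mathcal{A}_{<x}=\{A\in\mathcal{A} : |A|<x\}$. For $\mathcal{S}\subseteq\mathcal{A}$ and $S\in\mathcal{S}$, $\mathrm{irr}_{\mathcal{S}}(S)=\{s\in S : s\notin b(\mathcal{S}\setminus\{S\})\}$, and $\mathcal{S}$ is irredundant if $\mathrm{irr}_{\mathcal{S}}(S)\neq\emptyset$ for every $S\in\mathcal{S}$. Set $B=b(\mathcal{A}_{<n/2})$, and let $\mathcal{B}(\mathcal{A})$ denote any irredundant subfamily of $\mathcal{A}_{<n/2}$ of minimum size such that $b(\mathcal{B}(\mathcal{A}))=B$.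 *)

theory Defs
  imports Complex_Main
begin

definition base :: "nat set set \<Rightarrow> nat set" where
  "base F = \<Union>F"

definition union_closed :: "nat set set \<Rightarrow> bool" where
  "union_closed \<A> \<longleftrightarrow> finite \<A> \<and> (\<forall>X\<in>\<A>. finite X) \<and> (\<exists>X\<in>\<A>. X \<noteq> {}) \<and>
     (\<forall>X\<in>\<A>. \<forall>Y\<in>\<A>. X \<union> Y \<in> \<A>)"

definition separating :: "nat set set \<Rightarrow> nat \<Rightarrow> bool" where
  "separating \<A> n \<longleftrightarrow> (\<forall>x\<in>{1..n}. \<forall>y\<in>{1..n}. x \<noteq> y \<longrightarrow>
     (\<exists>A\<in>\<A>. (x \<in> A \<and> y \<notin> A) \<or> (y \<in> A \<and> x \<notin> A)))"

definition is_chain :: "nat set set \<Rightarrow> nat set set \<Rightarrow> bool" where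
  "is_chain \<A> C \<longleftrightarrow> C \<subseteq> \<A> \<and> (\<forall>X\<in>C. \<forall>Y\<in>C. X \<noteq> Y \<longrightarrow> X \<subset> Y \<or> Y \<subset> X)"

definition height :: "nat set set \<Rightarrow> nat" where
  "height \<A> = Max {card C | C. is_chain \<A> C}"

definition below :: "nat set set \<Rightarrow> real \<Rightarrow> nat set set" where
  "below \<A> x = {A \<in> \<A>. real (card A) < x}"

definition irr :: "nat set set \<Rightarrow> nat set \<Rightarrow> nat set" where
  "irr S X = {s \<in> X. s \<notin> base (S - {X})}"

definition irredundant :: "nat set set \<Rightarrow> bool" where
  "irredundant S \<longleftrightarrow> (\<forall>X\<in>S. irr S X \<noteq> {})"

definition B_candidate :: "nat set set \<Rightarrow> nat \<Rightarrow> nat set set \<Rightarrow> bool" where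
  "B_candidate \<A> n S \<longleftrightarrow> S \<subseteq> below \<A> (real n / 2) \<and> irredundant S \<and>
     base S = base (below \<A> (real n / 2))"

text \<open>S is a choice of B(A): a candidate of minimum size.\<close>
definition is_BA :: "nat set set \<Rightarrow> nat \<Rightarrow> nat set set \<Rightarrow> bool" where
  "is_BA \<A> n S \<longleftrightarrow> B_candidate \<A> n S \<and> (\<forall>S'. B_candidate \<A> n S' \<longrightarrow> card S \<le> card S')"

definition avg :: "nat set set \<Rightarrow> real" where
  "avg \<A> = (\<Sum>A\<in>\<A>. real (card A)) / real (card \<A>)"

end

theory Submission
  imports Defs
begin


locale setting =
  fixes A :: "nat set set" and n :: nat and B :: "nat set set"
  assumes uc: "union_closed A"
    and bA: "base A = {1..n}"
    and sep: "separating A n"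
    and ht: "height A = 4"
    and BA: "is_BA A n B"
    and cB: "card B = 4"
begin

definition small :: "nat set \<Rightarrow> bool" where
  "small X \<longleftrightarrow> X \<in> A \<and> 2 * card X < n"

lemma finA: "finite A" using uc unfolding union_closed_def by blast
lemma finX: "X \<in> A \<Longrightarrow> finite X" using uc unfolding union_closed_def by blast
lemma Un_in: "X \<in> A \<Longrightarrow> Y \<in> A \<Longrightarrow> X \<union> Y \<in> A" using uc unfolding union_closed_def by blast
lemma sub_n: "X \<in> A \<Longrightarrow> X \<subseteq> {1..n}" using bA unfolding base_def by blast

lemma Union_in: "finite F \<Longrightarrow> F \<noteq> {} \<Longrightarrow> F \<subseteq> A \<Longrightarrow> \<Union>F \<in> A"
  by (induction F rule: finite_ne_induct) (auto intro: Un_in)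

lemma top_in: "{1..n} \<in> A"
proof -
  have "A \<noteq> {}" using uc unfolding union_closed_def by blast
  then have "\<Union>A \<in> A" using Union_in finA by blast
  then show ?thesis using bA unfolding base_def by simp
qed

lemma chain5:
  assumes "X1 \<in> A" "X2 \<in> A" "X3 \<in> A" "X4 \<in> A" "X5 \<in> A"
    and "X1 \<subset> X2" "X2 \<subset> X3" "X3 \<subset> X4" "X4 \<subset> X5"
  shows False
proof -
  let ?C = "{X1,X2,X3,X4,X5}"
  have t: "X1 \<subset> X3" "X1 \<subset> X4" "X1 \<subset> X5" "X2 \<subset> X4" "X2 \<subset> X5" "X3 \<subset> X5"
    using assms by blast+
  have d: "X1 \<noteq> X2" "X1 \<noteq> X3" "X1 \<noteq> X4" "X1 \<noteq> X5" "X2 \<noteq> X3" "X2 \<noteq> X4" "X2 \<noteq> X5" "X3 \<noteq> X4" "X3 \<noteq> X5" "X4 \<noteq> X5"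
    using assms t by auto
  have ch: "is_chain A ?C" unfolding is_chain_def
  proof (intro conjI ballI impI)
    show "?C \<subseteq> A" using assms by blast
  next
    fix X Y assume XY: "X \<in> ?C" "Y \<in> ?C" "X \<noteq> Y"
    have le: "X1 \<subseteq> X2" "X1 \<subseteq> X3" "X1 \<subseteq> X4" "X1 \<subseteq> X5" "X2 \<subseteq> X3"
      "X2 \<subseteq> X4" "X2 \<subseteq> X5" "X3 \<subseteq> X4" "X3 \<subseteq> X5" "X4 \<subseteq> X5"
      using assms t by (simp_all add: psubset_imp_subset)
    from XY(1,2) have "X \<subseteq> Y \<or> Y \<subseteq> X" using le by auto
    with XY(3) show "X \<subset> Y \<or> Y \<subset> X" by blast
  qed
  have c5: "card ?C = 5" using d by simp
  have fin: "finite {card C | C. is_chain A C}"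
  proof -
    have "{card C | C. is_chain A C} \<subseteq> {..card A}"
      using finA by (auto simp: is_chain_def intro: card_mono)
    then show ?thesis using finite_subset by blast
  qed
  have "card ?C \<le> height A" unfolding height_def using fin ch by (auto intro: Max_ge)
  with c5 ht show False by simp
qed

lemma below_eq: "below A (real n / 2) = {X\<in>A. small X}"
  unfolding below_def small_def by auto

lemma B_small: "b \<in> B \<Longrightarrow> small b"
  using BA below_eq unfolding is_BA_def B_candidate_def by auto

lemma B_cover: "\<Union>B = {1..n}"
proof (rule ccontr)
  assume ne: "\<Union>B \<noteq> {1..n}"
  obtain b1 B1 where o1: "B = insert b1 B1" "b1 \<notin> B1" "card B1 = 3"
    using cB card_Suc_eq[of B 3] by auto
  obtain b2 B2 where o2: "B1 = insert b2 B2" "b2 \<notin> B2" "card B2 = 2"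
    using o1(3) card_Suc_eq[of B1 2] by auto
  obtain b3 B3 where o3: "B2 = insert b3 B3" "b3 \<notin> B3" "card B3 = 1"
    using o2(3) card_Suc_eq[of B2 1] by auto
  obtain b4 where o4: "B3 = {b4}" using o3(3) card_1_singletonE by blast
  have Beq: "B = {b1,b2,b3,b4}" using o1 o2 o3 o4 by simp
  have d: "b1 \<noteq> b2" "b1 \<noteq> b3" "b1 \<noteq> b4" "b2 \<noteq> b3" "b2 \<noteq> b4" "b3 \<noteq> b4"
    using o1 o2 o3 o4 by auto
  have irrB: "irredundant B" using BA unfolding is_BA_def B_candidate_def by blast
  have "B - {b2} = {b1,b3,b4}" using Beq d by auto
  then have "irr B b2 = {s\<in>b2. s \<notin> b1 \<and> s \<notin> b3 \<and> s \<notin> b4}" by (auto simp: irr_def base_def)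
  moreover have "irr B b2 \<noteq> {}" using irrB Beq unfolding irredundant_def by blast
  ultimately obtain e2 where e2: "e2 \<in> b2" "e2 \<notin> b1" "e2 \<notin> b3" "e2 \<notin> b4" by blast
  have "B - {b3} = {b1,b2,b4}" using Beq d by auto
  then have "irr B b3 = {s\<in>b3. s \<notin> b1 \<and> s \<notin> b2 \<and> s \<notin> b4}" by (auto simp: irr_def base_def)
  moreover have "irr B b3 \<noteq> {}" using irrB Beq unfolding irredundant_def by blast
  ultimately obtain e3 where e3: "e3 \<in> b3" "e3 \<notin> b1" "e3 \<notin> b2" "e3 \<notin> b4" by blast
  have "B - {b4} = {b1,b2,b3}" using Beq d by auto
  then have "irr B b4 = {s\<in>b4. s \<notin> b1 \<and> s \<notin> b2 \<and> s \<notin> b3}" by (auto simp: irr_def base_def)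
  moreover have "irr B b4 \<noteq> {}" using irrB Beq unfolding irredundant_def by blast
  ultimately obtain e4 where e4: "e4 \<in> b4" "e4 \<notin> b1" "e4 \<notin> b2" "e4 \<notin> b3" by blast
  have inA: "b1 \<in> A" "b2 \<in> A" "b3 \<in> A" "b4 \<in> A" using B_small Beq small_def by auto
  have sub: "b1 \<union> b2 \<union> b3 \<union> b4 \<subseteq> {1..n}" using inA sub_n by blast
  have c1: "b1 \<subset> b1 \<union> b2" using e2 by blast
  have c2: "b1 \<union> b2 \<subset> b1 \<union> b2 \<union> b3" using e3 by blast
  have c3: "b1 \<union> b2 \<union> b3 \<subset> b1 \<union> b2 \<union> b3 \<union> b4" using e4 by blast
  have ub: "\<Union>B = b1 \<union> b2 \<union> b3 \<union> b4" using Beq by auto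
  have c4: "b1 \<union> b2 \<union> b3 \<union> b4 \<subset> {1..n}" using sub ne ub by auto
  have m: "b1 \<union> b2 \<in> A" "b1 \<union> b2 \<union> b3 \<in> A" "b1 \<union> b2 \<union> b3 \<union> b4 \<in> A"
    using inA Un_in by blast+
  show False using chain5[OF inA(1) m top_in c1 c2 c3 c4] .
qed


lemma irr_sub: "finite F \<Longrightarrow> \<exists>F'\<subseteq>F. irredundant F' \<and> \<Union>F' = \<Union>F"
proof (induction "card F" arbitrary: F rule: less_induct)
  case less
  show ?case
  proof (cases "irredundant F")
    case True then show ?thesis by blast
  next
    case False
    then obtain X where X: "X \<in> F" "irr F X = {}" unfolding irredundant_def by blast
    then have "X \<subseteq> \<Union>(F - {X})" unfolding irr_def base_def by blast
    then have eq: "\<Union>(F - {X}) = \<Union>F" using X by blast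
    have "card (F - {X}) < card F" by (rule card_Diff1_less[OF less.prems X(1)])
    then have "\<exists>F'\<subseteq>F - {X}. irredundant F' \<and> \<Union>F' = \<Union>(F - {X})"
      using less.hyps less.prems by simp
    then obtain F' where F': "F' \<subseteq> F - {X}" "irredundant F'" "\<Union>F' = \<Union>(F - {X})"
      by blast
    have "F' \<subseteq> F" using F'(1) by blast
    then show ?thesis using F'(2,3) eq by (intro exI[of _ F']) simp
  qed
qed

lemma base_below: "base (below A (real n / 2)) = {1..n}"
proof
  show "base (below A (real n / 2)) \<subseteq> {1..n}"
    unfolding below_eq base_def using sub_n by blast
  show "{1..n} \<subseteq> base (below A (real n / 2))"
  proof
    fix x assume "x \<in> {1..n}"
    then obtain b where "b \<in> B" "x \<in> b" using B_cover by blast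
    then show "x \<in> base (below A (real n / 2))"
      unfolding below_eq base_def using B_small[of b] small_def by blast
  qed
qed

lemma cover3:
  assumes "small X" "small Y" "small Z"
  shows "X \<union> Y \<union> Z \<noteq> {1..n}"
proof
  assume cov: "X \<union> Y \<union> Z = {1..n}"
  obtain F' where F': "F' \<subseteq> {X,Y,Z}" "irredundant F'" "\<Union>F' = \<Union>{X,Y,Z}"
    using irr_sub[of "{X,Y,Z}"] by auto
  have sF: "F' \<subseteq> below A (real n / 2)"
    unfolding below_eq using F'(1) assms unfolding small_def by blast
  have bF: "base F' = base (below A (real n / 2))"
    unfolding base_below using F'(3) cov by (simp add: base_def Un_assoc)
  have "B_candidate A n F'"
    unfolding B_candidate_def using sF F'(2) bF by blast
  then have "card B \<le> card F'" using BA unfolding is_BA_def by blast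
  moreover have "card F' \<le> card {X,Y,Z}" using F'(1) by (simp add: card_mono)
  moreover have "card {X,Y,Z} \<le> 3" by (simp add: card_insert_if)
  ultimately show False using cB by simp
qed

lemma small_ne_top: "small S \<Longrightarrow> S \<noteq> {1..n}"
  unfolding small_def by auto

lemma B_not_sub:
  assumes "Y \<noteq> {1..n}" "Y \<subseteq> {1..n}"
  shows "\<exists>b. small b \<and> \<not> b \<subseteq> Y"
  using B_cover B_small assms by blast

lemma small_min:
  assumes "small S" "X \<in> A" "X \<subset> S"
  shows False
proof -
  have SA: "S \<in> A" using assms small_def by auto
  obtain a where a: "small a" "\<not> a \<subseteq> S"
    using B_not_sub[of S] small_ne_top[OF assms(1)] sub_n[OF SA] by blast
  have aA: "a \<in> A" using a small_def by auto
  have n1: "S \<union> a \<noteq> {1..n}" using cover3[OF assms(1) a(1) a(1)] by simp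
  obtain b where b: "small b" "\<not> b \<subseteq> S \<union> a"
    using B_not_sub[of "S \<union> a"] n1 sub_n SA aA by blast
  have bA: "b \<in> A" using b small_def by auto
  have n2: "S \<union> a \<union> b \<noteq> {1..n}" using cover3[OF assms(1) a(1) b(1)] .
  have s3: "S \<union> a \<union> b \<subseteq> {1..n}" using sub_n SA aA bA by blast
  have c2: "S \<subset> S \<union> a" using a(2) by blast
  have c3: "S \<union> a \<subset> S \<union> a \<union> b" using b(2) by blast
  have c4: "S \<union> a \<union> b \<subset> {1..n}" using n2 s3 by blast
  have m: "S \<union> a \<in> A" "S \<union> a \<union> b \<in> A" using Un_in SA aA bA by blast+
  show False using chain5[OF assms(2) SA m(1) m(2) top_in assms(3) c2 c3 c4] .
qed

end


context setting
begin

lemma smallA: "small X \<Longrightarrow> X \<in> A" unfolding small_def by blast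

lemma pair_facts:
  assumes S1: "small S1" and S: "small S" and ne: "S \<noteq> S1"
  shows "S1 \<subset> S1 \<union> S" "S1 \<union> S \<noteq> {1..n}" "S1 \<union> S \<in> A"
    "\<exists>Z\<in>A. S1 \<union> S \<subset> Z \<and> Z \<subset> {1..n}" "\<not> small (S1 \<union> S)"
proof -
  have A1: "S1 \<in> A" and A2: "S \<in> A" using S1 S smallA by auto
  have "\<not> S \<subseteq> S1"
  proof
    assume "S \<subseteq> S1"
    then have "S \<subset> S1" using ne by blast
    then show False using small_min[OF S1 A2] by blast
  qed
  then show p1: "S1 \<subset> S1 \<union> S" by blast
  show p2: "S1 \<union> S \<noteq> {1..n}" using cover3[OF S1 S S] by simp
  show p3: "S1 \<union> S \<in> A" using Un_in A1 A2 by blast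
  have sub: "S1 \<union> S \<subseteq> {1..n}" using sub_n p3 by blast
  obtain b where b: "small b" "\<not> b \<subseteq> S1 \<union> S" using B_not_sub[OF p2 sub] by blast
  have bA: "b \<in> A" using b smallA by blast
  have "S1 \<union> S \<union> b \<noteq> {1..n}" using cover3[OF S1 S b(1)] .
  moreover have "S1 \<union> S \<union> b \<subseteq> {1..n}" using sub sub_n[OF bA] by blast
  moreover have "S1 \<union> S \<union> b \<in> A" using Un_in p3 bA by blast
  ultimately show "\<exists>Z\<in>A. S1 \<union> S \<subset> Z \<and> Z \<subset> {1..n}" using b(2)
    by (intro bexI[of _ "S1 \<union> S \<union> b"]) auto
  show "\<not> small (S1 \<union> S)"
  proof
    assume "small (S1 \<union> S)"
    then show False using small_min[OF _ A1 p1] by blast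
  qed
qed

lemma group_union:
  assumes S1: "small S1" and S: "small S" and S': "small S'"
    and ne: "S \<noteq> S1" "S' \<noteq> S1" "S \<noteq> S'" and eq: "S1 \<union> S = S1 \<union> S'"
  shows "S \<union> S' = S1 \<union> S"
proof (rule ccontr)
  assume nq: "S \<union> S' \<noteq> S1 \<union> S"
  have A2: "S \<in> A" and A3: "S' \<in> A" using S S' smallA by auto
  have "\<not> S' \<subseteq> S"
  proof
    assume "S' \<subseteq> S"
    then have "S' \<subset> S" using ne by blast
    then show False using small_min[OF S A3] by blast
  qed
  then have c1: "S \<subset> S \<union> S'" by blast
  have c2: "S \<union> S' \<subset> S1 \<union> S" using nq eq by blast
  obtain Z where Z: "Z \<in> A" "S1 \<union> S \<subset> Z" "Z \<subset> {1..n}" using pair_facts(4)[OF S1 S ne(1)] by blast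
  have m: "S \<union> S' \<in> A" "S1 \<union> S \<in> A" using Un_in A2 A3 pair_facts(3)[OF S1 S ne(1)] by auto
  show False using chain5[OF A2 m Z(1) top_in c1 c2 Z(2) Z(3)] .
qed

lemma bad_card:
  assumes S1: "small S1" and S: "small S" and S': "small S'"
    and ne: "S \<noteq> S1" "S' \<noteq> S1" and nY: "S1 \<union> S \<noteq> S1 \<union> S'"
  shows "n \<le> card ((S1 \<union> S) \<union> (S1 \<union> S')) + 1"
proof -
  define Y where "Y = S1 \<union> S"
  define Y' where "Y' = S1 \<union> S'"
  define U where "U = Y \<union> Y'"
  have A1: "S1 \<in> A" using S1 smallA by auto
  have YA: "Y \<in> A" and Y'A: "Y' \<in> A" using pair_facts(3) assms unfolding Y_def Y'_def by auto
  have UA: "U \<in> A" unfolding U_def using Un_in YA Y'A by blast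
  have Usub: "U \<subseteq> {1..n}" using sub_n UA by blast
  have Une: "U \<noteq> {1..n}" unfolding U_def Y_def Y'_def using cover3[OF S1 S S'] by (simp add: Un_ac)
  have p1: "S1 \<subset> Y" unfolding Y_def using pair_facts(1)[OF S1 S ne(1)] .
  have YU: "Y \<subset> U"
  proof -
    have "Y \<subseteq> U" unfolding U_def by blast
    moreover have "Y \<noteq> U"
    proof
      assume "Y = U"
      then have "Y' \<subset> Y" using nY unfolding U_def Y_def Y'_def by blast
      moreover have "S1 \<subset> Y'" unfolding Y'_def using pair_facts(1)[OF S1 S' ne(2)] .
      moreover obtain Z where Z: "Z \<in> A" "Y \<subset> Z" "Z \<subset> {1..n}"
        using pair_facts(4)[OF S1 S ne(1)] unfolding Y_def by blast
      ultimately show False using chain5[OF A1 Y'A YA Z(1) top_in] by blast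
    qed
    ultimately show ?thesis by blast
  qed
  have key: "U \<union> X = U \<or> U \<union> X = {1..n}" if XA: "X \<in> A" for X
  proof (rule ccontr)
    assume "\<not> (U \<union> X = U \<or> U \<union> X = {1..n})"
    then have c3: "U \<subset> U \<union> X" and c4: "U \<union> X \<subset> {1..n}" using Usub sub_n[OF XA] by blast+
    have "U \<union> X \<in> A" using Un_in UA XA by blast
    then show False using chain5[OF A1 YA UA _ top_in p1 YU c3 c4] by blast
  qed
  have one: "x = y" if x: "x \<in> {1..n} - U" and y: "y \<in> {1..n} - U" for x y
  proof (rule ccontr)
    assume "x \<noteq> y"
    then obtain X where X: "X \<in> A" "(x \<in> X \<and> y \<notin> X) \<or> (y \<in> X \<and> x \<notin> X)"
      using sep x y unfolding separating_def by blast
    from key[OF X(1)] show False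
    proof
      assume "U \<union> X = U" then show False using X(2) x y by blast
    next
      assume "U \<union> X = {1..n}" then show False using X(2) x y by blast
    qed
  qed
  have "card ({1..n} - U) \<le> Suc 0"
    using one by (subst card_le_Suc0_iff_eq) auto
  moreover have "card ({1..n} - U) = n - card U"
    using Usub by (simp add: card_Diff_subset finite_subset)
  ultimately show ?thesis unfolding U_def Y_def Y'_def by simp
qed

end


context setting
begin

definition cc :: "nat set \<Rightarrow> real" where "cc X = real (card X) - real (n div 2) + 1"

lemma main_sum: "0 < (\<Sum>X\<in>A. cc X)"
proof -
  let ?f = "n div 2"
  have n2f: "2 * ?f \<le> n" by simp
  have n2fr: "2 * real ?f \<le> real n" using n2f by linarith
  define D where "D = {X\<in>A. card X + 2 \<le> ?f}"
  have finD: "finite D" unfolding D_def using finA by simp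
  have DA: "D \<subseteq> A" unfolding D_def by blast
  have Dsmall: "small S" if "S \<in> D" for S using that n2f unfolding D_def small_def by auto
  have cpos: "0 \<le> cc X" if "X \<in> A" "X \<notin> D" for X using that unfolding D_def cc_def by auto
  have ctop: "cc {1..n} = real n - real ?f + 1" unfolding cc_def by simp
  have ctop_pos: "0 < cc {1..n}" using ctop n2fr by linarith
  have topD: "{1..n} \<notin> D" unfolding D_def using n2f by auto
  show ?thesis
  proof (cases "D = {}")
    case True
    have "cc {1..n} \<le> sum cc A"
      by (rule member_le_sum) (use top_in cpos True finA in auto)
    then show ?thesis using ctop_pos by linarith
  next
    case False
    then obtain S1 where S1D: "S1 \<in> D" by blast
    have S1s: "small S1" using Dsmall S1D .
    have finS1: "finite S1" using S1s smallA finX by blast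
    define D' where "D' = D - {S1}"
    define U where "U = (\<lambda>S. S1 \<union> S)"
    define YS where "YS = U ` D'"
    define G where "G Y = {S\<in>D'. U S = Y}" for Y
    have finD': "finite D'" unfolding D'_def using finD by simp
    have finYS: "finite YS" unfolding YS_def using finD' by simp
    have D's: "small S \<and> S \<noteq> S1" if "S \<in> D'" for S using that unfolding D'_def using Dsmall by auto
    have Yfacts: "Y \<in> A \<and> \<not> small Y \<and> Y \<noteq> {1..n} \<and> S1 \<subset> Y" if YY: "Y \<in> YS" for Y
    proof -
      obtain S where S: "S \<in> D'" "Y = S1 \<union> S" using YY unfolding YS_def U_def by blast
      have sS: "small S" "S \<noteq> S1" using D's[OF S(1)] by auto
      note pf = pair_facts[OF S1s sS]
      show ?thesis unfolding S(2) using pf(1,2,3,5) by simp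
    qed
    have Ybig: "?f \<le> card Y" if "Y \<in> YS" for Y
      using Yfacts[OF that] n2f unfolding small_def by auto
    have ccY: "1 \<le> cc Y" if "Y \<in> YS" for Y using Ybig[OF that] unfolding cc_def by simp
    define P where "P = insert {1..n} (insert S1 (YS \<union> D'))"
    have PA: "P \<subseteq> A" unfolding P_def using top_in Yfacts DA S1D D'_def by blast
    have "sum cc P \<le> sum cc A"
    proof (rule sum_mono2[OF finA PA])
      fix b assume "b \<in> A - P"
      then have "b \<in> A" "b \<notin> D" unfolding P_def D'_def by auto
      then show "0 \<le> cc b" using cpos by blast
    qed
    have YSD: "YS \<inter> D' = {}"
    proof -
      have "Y \<notin> D" if "Y \<in> YS" for Y using Ybig[OF that] unfolding D_def by auto
      then show ?thesis unfolding D'_def by blast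
    qed
    have S1n: "S1 \<notin> YS \<union> D'" using Yfacts unfolding D'_def by blast
    have topn: "{1..n} \<notin> insert S1 (YS \<union> D')" using topD S1D Yfacts unfolding D'_def by blast
    have sumP: "sum cc P = cc {1..n} + (cc S1 + (sum cc YS + sum cc D'))"
      unfolding P_def using finYS finD' YSD S1n topn by (simp add: sum.union_disjoint)
    have sumD': "sum cc D' = (\<Sum>Y\<in>YS. sum cc (G Y))"
      unfolding YS_def G_def using sum.image_gen[OF finD', of cc U] by simp
    define t where "t Y = cc Y + sum cc (G Y)" for Y
    have sumYS: "sum cc YS + sum cc D' = sum t YS" unfolding t_def sumD' by (simp add: sum.distrib)
    have tbound: "2 * cc Y - real (card S1) \<le> t Y" if Y: "Y \<in> YS" for Y
    proof -
      have GY: "G Y \<noteq> {}" using Y unfolding YS_def G_def by auto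
      have finG: "finite (G Y)" unfolding G_def using finD' by simp
      have Gs: "small S \<and> S \<noteq> S1 \<and> S1 \<union> S = Y" if "S \<in> G Y" for S
        using that D's unfolding G_def U_def by auto
      have Ssub: "S \<subseteq> Y" if "S \<in> G Y" for S using Gs[OF that] by blast
      have finY: "finite Y" using Yfacts[OF Y] finX by blast
      have ccS: "cc S = cc Y - real (card (Y - S))" if "S \<in> G Y" for S
      proof -
        have "card (Y - S) = card Y - card S" using Ssub[OF that] finY
          by (simp add: card_Diff_subset finite_subset)
        moreover have "card S \<le> card Y" using Ssub[OF that] finY card_mono by blast
        ultimately show ?thesis unfolding cc_def by simp
      qed
      have disj: "\<forall>S\<in>G Y. \<forall>S'\<in>G Y. S \<noteq> S' \<longrightarrow> (Y - S) \<inter> (Y - S') = {}"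
      proof (intro ballI impI)
        fix S S' assume a: "S \<in> G Y" "S' \<in> G Y" "S \<noteq> S'"
        have "S \<union> S' = S1 \<union> S"
          using group_union[OF S1s] Gs[OF a(1)] Gs[OF a(2)] a(3) by metis
        then show "(Y - S) \<inter> (Y - S') = {}" using Gs[OF a(1)] by blast
      qed
      have cardU: "card (\<Union>S\<in>G Y. Y - S) = (\<Sum>S\<in>G Y. card (Y - S))"
        by (rule card_UN_disjoint[OF finG _ disj]) (use finY in auto)
      have "(\<Union>S\<in>G Y. Y - S) \<subseteq> S1" using Gs by blast
      then have "card (\<Union>S\<in>G Y. Y - S) \<le> card S1" using finS1 card_mono by blast
      then have sumF: "(\<Sum>S\<in>G Y. real (card (Y - S))) \<le> real (card S1)"
        using cardU by (metis of_nat_le_iff of_nat_sum)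
      have "sum cc (G Y) = (\<Sum>S\<in>G Y. cc Y - real (card (Y - S)))"
        using ccS by (rule sum.cong[OF refl])
      also have "\<dots> = real (card (G Y)) * cc Y - (\<Sum>S\<in>G Y. real (card (Y - S)))"
        by (simp add: sum_subtractf)
      finally have tY: "t Y = (1 + real (card (G Y))) * cc Y - (\<Sum>S\<in>G Y. real (card (Y - S)))"
        unfolding t_def by (simp add: algebra_simps)
      have "1 \<le> card (G Y)" using GY finG by (simp add: Suc_le_eq card_gt_0_iff)
      then have "2 \<le> 1 + real (card (G Y))" by simp
      moreover have "0 \<le> cc Y" using ccY[OF Y] by simp
      ultimately have "2 * cc Y \<le> (1 + real (card (G Y))) * cc Y" by (rule mult_right_mono)
      then show ?thesis using tY sumF by linarith
    qed
    define Bad where "Bad = {Y\<in>YS. 2 * cc Y < real (card S1)}"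
    have Bad1: "Y = Y'" if b: "Y \<in> Bad" "Y' \<in> Bad" for Y Y'
    proof (rule ccontr)
      assume ne: "Y \<noteq> Y'"
      obtain S where S: "S \<in> D'" "Y = S1 \<union> S" using b(1) unfolding Bad_def YS_def U_def by blast
      obtain S' where S': "S' \<in> D'" "Y' = S1 \<union> S'" using b(2) unfolding Bad_def YS_def U_def by blast
      have YY: "Y \<in> YS" "Y' \<in> YS" using b unfolding Bad_def by auto
      have finY: "finite Y" "finite Y'" using Yfacts[OF YY(1)] Yfacts[OF YY(2)] finX by blast+
      have "n \<le> card (Y \<union> Y') + 1" using bad_card[OF S1s, of S S'] D's[OF S(1)] D's[OF S'(1)] S(2) S'(2) ne by auto
      then have r1: "real n \<le> real (card (Y \<union> Y')) + 1" by linarith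
      have "card Y + card Y' = card (Y \<union> Y') + card (Y \<inter> Y')" using card_Un_Int finY by blast
      then have r2: "real (card Y) + real (card Y') = real (card (Y \<union> Y')) + real (card (Y \<inter> Y'))" by linarith
      have "card S1 \<le> card (Y \<inter> Y')" using S(2) S'(2) finY card_mono[of "Y \<inter> Y'" S1] by blast
      then have r3: "real (card S1) \<le> real (card (Y \<inter> Y'))" by linarith
      have r4: "2 * cc Y < real (card S1)" "2 * cc Y' < real (card S1)" using b unfolding Bad_def by auto
      show False using r1 r2 r3 r4 n2fr unfolding cc_def by argo
    qed
    have sumt: "min 0 (2 - real (card S1)) \<le> sum t YS"
    proof -
      have BadYS: "Bad \<subseteq> YS" unfolding Bad_def by blast
      have split: "sum t YS = sum t (YS - Bad) + sum t Bad"
        using sum.subset_diff[OF BadYS finYS] by simp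
      have nn: "0 \<le> sum t (YS - Bad)"
      proof (rule sum_nonneg)
        fix Y assume "Y \<in> YS - Bad"
        then have "Y \<in> YS" "\<not> 2 * cc Y < real (card S1)" unfolding Bad_def by auto
        then show "0 \<le> t Y" using tbound by fastforce
      qed
      have "min 0 (2 - real (card S1)) \<le> sum t Bad"
      proof (cases "Bad = {}")
        case True then show ?thesis by simp
      next
        case False
        then obtain Y0 where Y0: "Y0 \<in> Bad" by blast
        then have "Bad = {Y0}" using Bad1 by blast
        moreover have "2 - real (card S1) \<le> t Y0"
          using tbound[of Y0] ccY[of Y0] Y0 BadYS by fastforce
        ultimately show ?thesis by simp
      qed
      then show ?thesis using split nn by linarith
    qed
    have "cc S1 = real (card S1) - real ?f + 1" unfolding cc_def by simp
    then have "0 < sum cc P" using sumP sumYS sumt ctop n2fr by linarith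
    then show ?thesis using \<open>sum cc P \<le> sum cc A\<close> by linarith
  qed
qed

end

theorem theorem4p1:
  fixes \<A> :: "nat set set" and n :: nat and \<B> :: "nat set set"
  assumes "union_closed \<A>"
    and "base \<A> = {1..n}"
    and "separating \<A> n"
    and "height \<A> = 4"
    and "is_BA \<A> n \<B>"
    and "card \<B> = 4"
  shows "avg \<A> > real (n div 2) - 1"
proof -
  interpret S: setting \<A> n \<B> using assms by unfold_locales
  have pos: "0 < (\<Sum>X\<in>\<A>. S.cc X)" by (rule S.main_sum)
  have cardpos: "0 < card \<A>" using S.finA S.top_in card_gt_0_iff by blast
  have eq: "(\<Sum>X\<in>\<A>. S.cc X) = (\<Sum>X\<in>\<A>. real (card X)) - (real (n div 2) - 1) * real (card \<A>)"
    unfolding S.cc_def by (simp add: sum_subtractf sum.distrib algebra_simps)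
  have "(real (n div 2) - 1) * real (card \<A>) < (\<Sum>X\<in>\<A>. real (card X))" using pos eq by linarith
  then show ?thesis unfolding avg_def using cardpos by (simp add: pos_less_divide_eq)
qed

end
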